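(* The logic $\mathsf{CK}\oplus\mathsf{C}_\Diamond\oplus\mathsf{N}_\Diamond$ is a conservative extension of $\mathsf{CK}_\Box$: a $\Diamond$-free formula is derivable in $\mathsf{CK}\oplus\mathsf{C}_\Diamond\oplus\mathsf{N}_\Diamond$ if and only if it is a theorem of $\mathsf{CK}_\Box$.
   Context: Formulas: $\mathbf{L}$ is generated from a countably infinite set of propositional variables by $\varphi ::= p \mid \bot \mid \varphi\wedge\varphi \mid \varphi\vee\varphi \mid \varphi\to\varphi \mid \Box\varphi \mid \Diamond\varphi$. Axioms: $\mathsf{K}_\Box$: $\Box(\varphi\to\psi)\to(\Box\varphi\to\Box\psi)$; $\mathsf{K}_\Diamond$: $\Box(\varphi\to\psi)\to(\Diamond\varphi\to\Diamond\psi)$; $\mathsf{N}_\Diamond$: $\Diamond\bot\to\bot$; $\mathsf{C}_\Diamond$: $\Diamond(\varphi\vee\psi)\to\Diamond\varphi\vee\Diamond\psi$. For a set $\mathsf{Ax}$ of axioms, $\mathsf{CK}\oplus\mathsf{Ax}$ is the relation $\Gamma\vdash_{\mathsf{Ax}}\varphi$ inductively generated by: (Ax) $\Gamma\vdash\varphi$ whenever $\varphi$ is a substitution instance of an axiom of a standard Hilbert axiomatisation of intuitionistic propositional logic, of $\mathsf{K}_\Box$, of $\mathsf{K}_\Diamond$, or of an element of $\mathsf{Ax}$; (El) $\Gamma\vdash\varphi$ if $\varphi\in\Gamma$; (MP) from $\Gamma\vdash\varphi$ and $\Gamma\vdash\varphi\to\psi$ infer $\Gamma\vdash\psi$; (Nec)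 from $\emptyset\vdash\varphi$ infer $\Gamma\vdash\Box\varphi$. A formula is derivable if $\emptyset\vdash_{\mathsf{Ax}}\varphi$. $\mathsf{CK}_\Box$ is the logic on $\Diamond$-free formulas axiomatised by intuitionistic propositional logic plus $\mathsf{K}_\Box$, closed under modus ponens and necessitation. A logic is a conservative extension of $\mathsf{CK}_\Box$ if its derivable $\Diamond$-free formulas are exactly the theorems of $\mathsf{CK}_\Box$. *)

theory Defs
  imports Main
begin

datatype form =
    Var nat
  | Bot
  | And form form
  | Or form form
  | Imp form form
  | Box form
  | Dia form

fun subst :: "(nat \<Rightarrow> form) \<Rightarrow> form \<Rightarrow> form" where
  "subst s (Var n) = s n"
| "subst s Bot = Bot"
| "subst s (And a b) = And (subst s a) (subst s b)"
| "subst s (Or a b) = Or (subst s a) (subst s b)"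
| "subst s (Imp a b) = Imp (subst s a) (subst s b)"
| "subst s (Box a) = Box (subst s a)"
| "subst s (Dia a) = Dia (subst s a)"

fun dia_free :: "form \<Rightarrow> bool" where
  "dia_free (Var n) = True"
| "dia_free Bot = True"
| "dia_free (And a b) = (dia_free a \<and> dia_free b)"
| "dia_free (Or a b) = (dia_free a \<and> dia_free b)"
| "dia_free (Imp a b) = (dia_free a \<and> dia_free b)"
| "dia_free (Box a) = dia_free a"
| "dia_free (Dia a) = False"

abbreviation "p0 \<equiv> Var 0"
abbreviation "p1 \<equiv> Var 1"
abbreviation "p2 \<equiv> Var 2"

text \<open>A standard Hilbert axiomatisation of intuitionistic propositional logic
  (as schemata written with the variables p0, p1, p2).\<close>
definition IPC_axioms :: "form set" where
  "IPC_axioms = {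
     Imp p0 (Imp p1 p0),
     Imp (Imp p0 (Imp p1 p2)) (Imp (Imp p0 p1) (Imp p0 p2)),
     Imp (And p0 p1) p0,
     Imp (And p0 p1) p1,
     Imp p0 (Imp p1 (And p0 p1)),
     Imp p0 (Or p0 p1),
     Imp p1 (Or p0 p1),
     Imp (Imp p0 p2) (Imp (Imp p1 p2) (Imp (Or p0 p1) p2)),
     Imp Bot p0 }"

definition K_box :: form where
  "K_box = Imp (Box (Imp p0 p1)) (Imp (Box p0) (Box p1))"

definition K_dia :: form where
  "K_dia = Imp (Box (Imp p0 p1)) (Imp (Dia p0) (Dia p1))"

definition N_dia :: form where
  "N_dia = Imp (Dia Bot) Bot"

definition C_dia :: form where
  "C_dia = Imp (Dia (Or p0 p1)) (Or (Dia p0) (Dia p1))"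

inductive deriv :: "form set \<Rightarrow> form set \<Rightarrow> form \<Rightarrow> bool" where
  ax: "\<phi> \<in> IPC_axioms \<union> {K_box, K_dia} \<union> Ax \<Longrightarrow> deriv Ax \<Gamma> (subst s \<phi>)"
| el: "\<phi> \<in> \<Gamma> \<Longrightarrow> deriv Ax \<Gamma> \<phi>"
| mp: "deriv Ax \<Gamma> \<phi> \<Longrightarrow> deriv Ax \<Gamma> (Imp \<phi> \<psi>) \<Longrightarrow> deriv Ax \<Gamma> \<psi>"
| nec: "deriv Ax {} \<phi> \<Longrightarrow> deriv Ax \<Gamma> (Box \<phi>)"

inductive CKbox :: "form \<Rightarrow> bool" where
  ax: "\<phi> \<in> IPC_axioms \<union> {K_box} \<Longrightarrow> (\<forall>n. dia_free (s n)) \<Longrightarrow> CKbox (subst s \<phi>)"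
| mp: "CKbox \<phi> \<Longrightarrow> CKbox (Imp \<phi> \<psi>) \<Longrightarrow> dia_free \<psi> \<Longrightarrow> CKbox \<psi>"
| nec: "CKbox \<phi> \<Longrightarrow> CKbox (Box \<phi>)"

end

theory Submission
  imports Defs
begin

fun tr :: "form \<Rightarrow> form" where
  "tr (Var n) = Var n"
| "tr Bot = Bot"
| "tr (And a b) = And (tr a) (tr b)"
| "tr (Or a b) = Or (tr a) (tr b)"
| "tr (Imp a b) = Imp (tr a) (tr b)"
| "tr (Box a) = Box (tr a)"
| "tr (Dia a) = Bot"

lemma tr_df: "dia_free (tr \<phi>)"
  by (induction \<phi>) auto

lemma tr_id: "dia_free \<phi> \<Longrightarrow> tr \<phi> = \<phi>"
  by (induction \<phi>) auto

lemma tr_subst: "dia_free \<phi> \<Longrightarrow> tr (subst s \<phi>) = subst (tr \<circ> s) \<phi>"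
  by (induction \<phi>) auto

lemma bb: "CKbox (Imp Bot \<psi>)" if "dia_free \<psi>"
proof -
  have "CKbox (subst (\<lambda>_. \<psi>) (Imp Bot p0))"
    by (rule CKbox.ax) (auto simp: IPC_axioms_def that)
  thus ?thesis by simp
qed

lemma kd: "dia_free x \<Longrightarrow> CKbox (Imp x (Imp Bot Bot))"
proof -
  assume x: "dia_free x"
  have "CKbox (subst (\<lambda>n. if n = 0 then Imp Bot Bot else x) (Imp p0 (Imp p1 p0)))"
    by (rule CKbox.ax) (auto simp: IPC_axioms_def x)
  hence "CKbox (Imp (Imp Bot Bot) (Imp x (Imp Bot Bot)))" by simp
  from CKbox.mp[OF bb[of Bot] this] x show ?thesis by simp
qed

lemma sound: "deriv Ax \<Gamma> \<phi> \<Longrightarrow> Ax = {C_dia, N_dia} \<Longrightarrow> \<Gamma> = {} \<Longrightarrow> CKbox (tr \<phi>)"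
proof (induction rule: deriv.induct)
  case (ax \<phi> Ax \<Gamma> s)
  show ?case
  proof (cases "\<phi> \<in> IPC_axioms \<union> {K_box}")
    case True
    hence df: "dia_free \<phi>" by (auto simp: IPC_axioms_def K_box_def)
    have "CKbox (subst (tr \<circ> s) \<phi>)"
      by (rule CKbox.ax) (use True tr_df in auto)
    thus ?thesis using tr_subst[OF df] by simp
  next
    case False
    with ax have "\<phi> = K_dia \<or> \<phi> = C_dia \<or> \<phi> = N_dia" by auto
    thus ?thesis
    proof (elim disjE)
      assume "\<phi> = K_dia" thus ?thesis by (simp add: K_dia_def kd tr_df)
    next
      assume "\<phi> = C_dia" thus ?thesis by (simp add: C_dia_def bb)
    next
      assume "\<phi> = N_dia" thus ?thesis by (simp add: N_dia_def bb)
    qed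
  qed
next
  case (el \<phi> \<Gamma> Ax) thus ?case by simp
next
  case (mp Ax \<Gamma> \<phi> \<psi>)
  have a: "CKbox (tr \<phi>)" using mp.IH(1) mp.prems by simp
  have b: "CKbox (Imp (tr \<phi>) (tr \<psi>))" using mp.IH(2) mp.prems by simp
  show ?case by (rule CKbox.mp[OF a b tr_df])
next
  case (nec Ax \<phi> \<Gamma>)
  thus ?case by (auto intro: CKbox.nec)
qed

lemma compl: "CKbox \<phi> \<Longrightarrow> deriv Ax {} \<phi>"
proof (induction rule: CKbox.induct)
  case (ax \<phi> s) thus ?case by (intro deriv.ax) auto
next
  case (mp \<phi> \<psi>) thus ?case by (blast intro: deriv.mp)
next
  case (nec \<phi>) thus ?case by (blast intro: deriv.nec)
qed

theorem mainTheorem12: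
  shows "\<forall>\<phi>. dia_free \<phi> \<longrightarrow> (deriv {C_dia, N_dia} {} \<phi> \<longleftrightarrow> CKbox \<phi>)"
proof (intro allI impI iffI)
  fix \<phi> assume d: "dia_free \<phi>" and "deriv {C_dia, N_dia} {} \<phi>"
  hence "CKbox (tr \<phi>)" using sound by blast
  thus "CKbox \<phi>" using tr_id[OF d] by simp
next
  fix \<phi> assume "CKbox \<phi>" thus "deriv {C_dia, N_dia} {} \<phi>" by (rule compl)
qed

end
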